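(* Let $\mu\in\mathcal P_2(\mathbb R^d)$, $N\ge1$ and let $\Gamma_{2,N}$ be a quadratic optimal $N$-quantizer of $\mu$. Then for any probability measure $\nu$ on $\mathbb R^d$ such that $\hat\mu^{\Gamma_{2,N}}\le_{cvx}\nu\le_{cvx}\mu$, $\Gamma_{2,N}$ is a quadratic optimal $N$-quantizer of $\nu$ and $\hat\nu^{\Gamma_{2,N}}=\hat\mu^{\Gamma_{2,N}}$.
   Context: $\mu\le_{cvx}\nu$ means $\int\varphi\,d\mu\le\int\varphi\,d\nu$ for all convex $\varphi:\mathbb R^d\to\mathbb R$. A quadratic optimal $N$-quantizer of a probability measure $\mu$ with finite second moment is a set $\Gamma\subset\mathbb R^d$ with $|\Gamma|\le N$ minimizing $\int\mathrm{dist}(x,\Gamma)^2\mu(dx)$ over all such sets. For such $\Gamma$, $\hat\mu^\Gamma=\mu\circ\mathrm{Proj}_\Gamma^{-1}$ where $\mathrm{Proj}_\Gamma:\mathbb R^d\to\Gamma$ is any Borel map with $|x-\mathrm{Proj}_\Gamma(x)|=\mathrm{dist}(x,\Gamma)$ (the image does not depend on the choice). *)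

theory Defs
  imports "HOL-Probability.Probability"
begin

text \<open>Probability measures on the Borel sets of R^d (d arbitrary, modelled by a
euclidean_space type) with finite second moment.\<close>
definition P2 :: "'a::euclidean_space measure \<Rightarrow> bool" where
  "P2 M \<longleftrightarrow> prob_space M \<and> sets M = sets borel \<and> integrable M (\<lambda>x. (norm x)^2)"

text \<open>Integrals of convex functions are taken in the extended sense
(values in (-inf, +inf]); non-integrability w.r.t. nu means the nu-integral is +inf.\<close>
definition cvx_le :: "'a::euclidean_space measure \<Rightarrow> 'a measure \<Rightarrow> bool" where
  "cvx_le \<mu> \<nu> \<longleftrightarrow> (\<forall>\<phi>::'a \<Rightarrow> real. convex_on UNIV \<phi> \<longrightarrow> integrable \<nu> \<phi> \<longrightarrow>
      integrable \<mu> \<phi> \<and> (\<integral>x. \<phi> x \<partial>\<mu>) \<le> (\<integral>x. \<phi> x \<partial>\<nu>))"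

definition distortion :: "'a::euclidean_space measure \<Rightarrow> 'a set \<Rightarrow> ennreal" where
  "distortion \<mu> \<Gamma> = (\<integral>\<^sup>+ x. ennreal ((infdist x \<Gamma>)^2) \<partial>\<mu>)"

definition admissible_codebook :: "nat \<Rightarrow> 'a set \<Rightarrow> bool" where
  "admissible_codebook N \<Gamma> \<longleftrightarrow> finite \<Gamma> \<and> \<Gamma> \<noteq> {} \<and> card \<Gamma> \<le> N"

definition opt_quantizer :: "'a::euclidean_space measure \<Rightarrow> nat \<Rightarrow> 'a set \<Rightarrow> bool" where
  "opt_quantizer \<mu> N \<Gamma> \<longleftrightarrow> P2 \<mu> \<and> admissible_codebook N \<Gamma> \<and>
     (\<forall>\<Gamma>'. admissible_codebook N \<Gamma>' \<longrightarrow> distortion \<mu> \<Gamma> \<le> distortion \<mu> \<Gamma>')"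

definition nearest_proj :: "'a::euclidean_space set \<Rightarrow> ('a \<Rightarrow> 'a) \<Rightarrow> bool" where
  "nearest_proj \<Gamma> p \<longleftrightarrow> p \<in> borel_measurable borel \<and> (\<forall>x. p x \<in> \<Gamma> \<and> dist x (p x) = infdist x \<Gamma>)"

definition qproj :: "'a::euclidean_space set \<Rightarrow> 'a \<Rightarrow> 'a" where
  "qproj \<Gamma> = (SOME p. nearest_proj \<Gamma> p)"

definition quant_image :: "'a::euclidean_space measure \<Rightarrow> 'a set \<Rightarrow> 'a measure" where
  "quant_image \<mu> \<Gamma> = distr \<mu> borel (qproj \<Gamma>)"

end

theory Submission
  imports Defs
begin

definition aff :: "'a::euclidean_space \<Rightarrow> 'a \<Rightarrow> real" where
  "aff c x = 2*(c \<bullet> x) - (norm c)^2"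

definition FF :: "'a::euclidean_space set \<Rightarrow> ('a \<Rightarrow> real) \<Rightarrow> 'a \<Rightarrow> real" where
  "FF G w x = Max ((\<lambda>c. aff c x + w c) ` G)"

lemma dist_aff: "(dist x c)^2 = (norm x)^2 - aff c x"
  unfolding aff_def dist_norm
  by (simp add: power2_norm_eq_inner inner_diff_left inner_diff_right inner_commute)

lemma FF_ge: "finite G \<Longrightarrow> c \<in> G \<Longrightarrow> aff c x + w c \<le> FF G w x"
  unfolding FF_def by (intro Max_ge) auto

lemma FF_att: "finite G \<Longrightarrow> G \<noteq> {} \<Longrightarrow> \<exists>c\<in>G. FF G w x = aff c x + w c"
proof -
  assume "finite G" "G \<noteq> {}"
  then have "FF G w x \<in> (\<lambda>c. aff c x + w c) ` G" unfolding FF_def by (intro Max_in) auto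
  then show ?thesis by auto
qed

lemma aff_lin: "aff c (u *\<^sub>R x + (1-u) *\<^sub>R y) = u * aff c x + (1-u) * aff c y"
  unfolding aff_def by (simp add: inner_add_right algebra_simps)

lemma FF_convex: assumes "finite G" "G \<noteq> {}" shows "convex_on UNIV (FF G w)"
proof (rule convex_onI)
  fix t :: real and x y :: 'a assume t: "0 < t" "t < 1"
  obtain c where c: "c \<in> G" "FF G w ((1-t) *\<^sub>R x + t *\<^sub>R y) = aff c ((1-t) *\<^sub>R x + t *\<^sub>R y) + w c"
    using FF_att[OF assms] by blast
  have "aff c ((1-t) *\<^sub>R x + t *\<^sub>R y) + w c = (1-t) * (aff c x + w c) + t * (aff c y + w c)"
    using aff_lin[of c "1-t" x y] by (simp add: algebra_simps)
  also have "\<dots> \<le> (1-t) * FF G w x + t * FF G w y"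
    using t FF_ge[OF assms(1) c(1)] by (intro add_mono mult_left_mono) auto
  finally show "FF G w ((1-t) *\<^sub>R x + t *\<^sub>R y) \<le> (1-t) * FF G w x + t * FF G w y" using c by simp
qed simp

lemma infdist_att: fixes G :: "'a::euclidean_space set" assumes "finite G" "G \<noteq> {}" obtains c where "c \<in> G" "infdist x G = dist x c"
  using infdist_attains_inf[of G x] assms finite_imp_closed by blast

lemma FF0: assumes "finite G" "G \<noteq> {}" shows "FF G (\<lambda>_. 0) x = (norm x)^2 - (infdist x G)^2"
proof (rule antisym)
  obtain c where c: "c \<in> G" "FF G (\<lambda>_. 0) x = aff c x + 0" using FF_att[OF assms] by blast
  have "infdist x G \<le> dist x c" using c(1) by (rule infdist_le)
  then have "(infdist x G)^2 \<le> (dist x c)^2" by (simp add: power_mono infdist_nonneg)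
  then show "FF G (\<lambda>_. 0) x \<le> (norm x)^2 - (infdist x G)^2" using c dist_aff[of x c] by simp
next
  obtain c where c: "c \<in> G" "infdist x G = dist x c" using infdist_att[OF assms] by blast
  show "(norm x)^2 - (infdist x G)^2 \<le> FF G (\<lambda>_. 0) x"
    using FF_ge[OF assms(1) c(1), of x "\<lambda>_. 0"] c dist_aff[of x c] by simp
qed

lemma FF_meas[measurable]: assumes "finite G" shows "FF G w \<in> borel_measurable borel"
  unfolding FF_def aff_def using assms by measurable

lemma meas_M: "sets M = sets borel \<Longrightarrow> f \<in> borel_measurable borel \<Longrightarrow> f \<in> borel_measurable M"
  using measurable_cong_sets[of M borel borel borel] by simp

lemma infdist_meas[measurable]: "(\<lambda>x. infdist x G) \<in> borel_measurable borel"
  by (intro borel_measurable_continuous_onI continuous_on_infdist continuous_on_id)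

lemma int_quad:
  fixes M :: "'a::euclidean_space measure" and f :: "'a \<Rightarrow> real"
  assumes "P2 M" "f \<in> borel_measurable borel" "\<And>x. \<bar>f x\<bar> \<le> C * (norm x)^2 + D"
  shows "integrable M f"
proof -
  have pm: "prob_space M" "sets M = sets borel" "integrable M (\<lambda>x. (norm x)^2)" using assms(1) unfolding P2_def by auto
  interpret prob_space M by (rule pm)
  have i: "integrable M (\<lambda>x. C * (norm x)^2 + D)" using Bochner_Integration.integrable_add[OF integrable_mult_right[OF pm(3)] integrable_const] by blast
  show ?thesis
  proof (rule Bochner_Integration.integrable_bound[OF i])
    show "f \<in> borel_measurable M" using meas_M[OF pm(2) assms(2)] .
    show "AE x in M. norm (f x) \<le> norm (C * (norm x)^2 + D)"
    proof (intro AE_I2)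
      fix x :: 'a have "0 \<le> C * (norm x)^2 + D" using assms(3)[of x] by linarith
      then show "norm (f x) \<le> norm (C * (norm x)^2 + D)" using assms(3)[of x] by simp
    qed
  qed
qed

lemma infdist_sq_bound: assumes "c \<in> G" shows "(infdist x G)^2 \<le> 2 * (norm x)^2 + 2 * (norm c)^2"
proof -
  have "infdist x G \<le> norm x + norm c" using infdist_le[OF assms, of x] norm_triangle_ineq4[of x c]
    by (simp add: dist_norm)
  then have "(infdist x G)^2 \<le> (norm x + norm c)^2" by (simp add: power_mono infdist_nonneg)
  also have "\<dots> \<le> 2 * (norm x)^2 + 2 * (norm c)^2" 
  proof -
    have "0 \<le> (norm x - norm c)^2" by simp
    then show ?thesis by (simp add: power2_sum power2_diff)
  qed
  finally show ?thesis .
qed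

lemma int_infdist2: assumes "P2 M" "finite G" "G \<noteq> {}"
  shows "integrable M (\<lambda>x. (infdist x G)^2)"
proof -
  obtain c where "c \<in> G" using assms by auto
  show ?thesis
    by (rule int_quad[OF assms(1), of _ 2 "2 * (norm c)^2"]) (use infdist_sq_bound[OF \<open>c \<in> G\<close>] in auto)
qed

lemma FF_bound: assumes "finite G" "G \<noteq> {}" "\<And>c. c \<in> G \<Longrightarrow> \<bar>w c\<bar> \<le> B"
  shows "\<bar>FF G w x - FF G (\<lambda>_. 0) x\<bar> \<le> B"
proof -
  obtain c where c: "c \<in> G" "FF G w x = aff c x + w c" using FF_att[OF assms(1,2)] by blast
  obtain d where d: "d \<in> G" "FF G (\<lambda>_. 0) x = aff d x + 0" using FF_att[OF assms(1,2)] by blast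
  have 1: "aff c x \<le> FF G (\<lambda>_. 0) x" using FF_ge[OF assms(1) c(1), of x "\<lambda>_. 0"] by simp
  have 2: "aff d x + w d \<le> FF G w x" using FF_ge[OF assms(1) d(1)] .
  show ?thesis using 1 2 c d assms(3)[OF c(1)] assms(3)[OF d(1)] by (simp add: abs_le_iff)
qed

lemma int_FF: assumes "P2 M" "finite G" "G \<noteq> {}" "\<And>c. c \<in> G \<Longrightarrow> \<bar>w c\<bar> \<le> B"
  shows "integrable M (FF G w)"
proof -
  obtain c where c: "c \<in> G" using assms by auto
  have "\<bar>FF G w x\<bar> \<le> 3 * (norm x)^2 + (2 * (norm c)^2 + B)" for x
  proof -
    have a: "0 \<le> (infdist x G)^2" "0 \<le> (norm x)^2" by auto
    have b: "\<bar>FF G w x - FF G (\<lambda>_. 0) x\<bar> \<le> B" by (rule FF_bound[OF assms(2,3,4)])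
    have e: "FF G (\<lambda>_. 0) x = (norm x)^2 - (infdist x G)^2" by (rule FF0[OF assms(2,3)])
    have f: "(infdist x G)^2 \<le> 2 * (norm x)^2 + 2 * (norm c)^2" by (rule infdist_sq_bound[OF c])
    show ?thesis using a b e f unfolding abs_le_iff by linarith
  qed
  then show ?thesis using int_quad[OF assms(1) FF_meas[OF assms(2)], of w 3 "2 * (norm c)^2 + B"] by blast
qed

lemma P2D: assumes "P2 M" shows "prob_space M" "sets M = sets borel" "integrable M (\<lambda>x. (norm x)^2)"
  using assms unfolding P2_def by auto

lemma optD: assumes "opt_quantizer M N G" shows "P2 M" "finite G" "G \<noteq> {}" "card G \<le> N"
  "\<And>G'. admissible_codebook N G' \<Longrightarrow> distortion M G \<le> distortion M G'"
  using assms unfolding opt_quantizer_def admissible_codebook_def by auto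

lemma dist_real: assumes "P2 M" "finite G" "G \<noteq> {}"
  shows "distortion M G = ennreal (\<integral>x. (infdist x G)^2 \<partial>M)"
  unfolding distortion_def by (rule nn_integral_eq_integral[OF int_infdist2[OF assms]]) auto

lemma opt_real: assumes "opt_quantizer M N G" "admissible_codebook N G'"
  shows "(\<integral>x. (infdist x G)^2 \<partial>M) \<le> (\<integral>x. (infdist x G')^2 \<partial>M)"
proof -
  note o = optD[OF assms(1)]
  have g': "finite G'" "G' \<noteq> {}" using assms(2) unfolding admissible_codebook_def by auto
  have "ennreal (\<integral>x. (infdist x G)^2 \<partial>M) \<le> ennreal (\<integral>x. (infdist x G')^2 \<partial>M)"
    using o(5)[OF assms(2)] dist_real[OF o(1-3)] dist_real[OF o(1) g'] by simp
  moreover have "0 \<le> (\<integral>x. (infdist x G')^2 \<partial>M)" by (rule integral_nonneg_AE) auto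
  ultimately show ?thesis by (simp add: ennreal_le_iff)
qed

lemma norm_le_sq1: "(n::real) \<le> n^2 + 1"
proof -
  have "0 \<le> (n - 1)^2" by simp
  then have "2 * n \<le> n^2 + 1" by (simp add: power2_diff)
  then show ?thesis using zero_le_power2[of n] by (cases "n \<ge> 0") linarith+
qed

lemma int_lin: assumes "P2 M" "A \<in> sets borel"
  shows "integrable M (\<lambda>x. indicator A x * ((x - a) \<bullet> v))"
proof -
  have "(\<lambda>x. (x - a) \<bullet> v) \<in> borel_measurable borel" by (intro borel_measurable_continuous_onI continuous_intros)
  then have m: "(\<lambda>x. indicator A x * ((x - a) \<bullet> v)) \<in> borel_measurable borel"
    by (intro borel_measurable_times borel_measurable_indicator assms(2))
  have b: "\<bar>indicator A x * ((x - a) \<bullet> v)\<bar> \<le> norm v * (norm x)^2 + (norm v + norm a * norm v)" for x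
  proof -
    have "\<bar>indicator A x * ((x - a) \<bullet> v)\<bar> \<le> \<bar>(x - a) \<bullet> v\<bar>" by (simp add: indicator_def)
    also have "\<dots> \<le> norm (x - a) * norm v" by (rule Cauchy_Schwarz_ineq2)
    also have "\<dots> \<le> (norm x + norm a) * norm v" by (rule mult_right_mono[OF norm_triangle_ineq4 norm_ge_zero])
    also have "\<dots> \<le> ((norm x)^2 + 1 + norm a) * norm v"
      by (rule mult_right_mono[OF _ norm_ge_zero]) (use norm_le_sq1[of "norm x"] in linarith)
    also have "\<dots> = norm v * (norm x)^2 + (norm v + norm a * norm v)" by (simp add: algebra_simps)
    finally show ?thesis .
  qed
  show ?thesis using int_quad[OF assms(1) m b] .
qed

lemma int_ind: assumes "P2 M" "A \<in> sets borel"
  shows "integrable M (\<lambda>x. indicator A x * (K::real))"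
proof -
  have m: "(\<lambda>x. indicator A x * K) \<in> borel_measurable borel"
    by (intro borel_measurable_times borel_measurable_indicator assms(2) borel_measurable_const)
  have b: "\<bar>indicator A x * K\<bar> \<le> 0 * (norm x)^2 + \<bar>K\<bar>" for x :: 'a by (simp add: indicator_def)
  show ?thesis using int_quad[OF assms(1) m b] .
qed

lemma quad_zero: fixes c K :: real assumes "K \<ge> 0" "\<And>t::real. 0 \<le> t^2 * K - 2 * t * c" shows "c = 0"
proof -
  define t where "t = c / (K + 1)"
  have ct: "c = (K + 1) * t" unfolding t_def using assms(1) by simp
  have "0 \<le> t^2 * K - 2 * t * c" by (rule assms(2))
  also have "t^2 * K - 2 * t * c = - (t^2 * (K + 2))" unfolding ct by (simp add: algebra_simps power2_eq_square)
  finally have "t^2 * (K+2) \<le> 0" by simp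
  moreover have "0 \<le> t^2 * (K+2)" using assms(1) by simp
  ultimately have "t^2 * (K+2) = 0" by linarith
  then have "t = 0" using assms(1) by simp
  then show ?thesis using ct by simp
qed
lemma nsq0: fixes y v :: "'a::euclidean_space" shows
  "(norm (y - t *\<^sub>R v))^2 = (norm y)^2 - 2 * t * (y \<bullet> v) + t^2 * (norm v)^2"
  unfolding power2_norm_eq_inner
  by (simp add: inner_diff_left inner_diff_right inner_commute algebra_simps power2_eq_square)

lemma nsq: fixes x a v :: "'a::euclidean_space" shows
 "(dist x (a + t *\<^sub>R v))^2 = (dist x a)^2 + t^2 * (norm v)^2 - 2 * t * ((x - a) \<bullet> v)"
proof -
  have "x - (a + t *\<^sub>R v) = (x - a) - t *\<^sub>R v" by (simp add: algebra_simps)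
  then have "(dist x (a + t *\<^sub>R v))^2 = (norm ((x - a) - t *\<^sub>R v))^2" by (simp only: dist_norm)
  also have "\<dots> = (norm (x-a))^2 - 2 * t * ((x - a) \<bullet> v) + t^2 * (norm v)^2"
    by (rule nsq0)
  finally show ?thesis by (simp add: dist_norm)
qed
lemma stat:
  fixes M :: "'a::euclidean_space measure"
  assumes opt: "opt_quantizer M N G" and a: "a \<in> G" and A[measurable]: "A \<in> sets borel"
    and inA: "\<And>x. x \<in> A \<Longrightarrow> dist x a = infdist x G"
    and outA: "\<And>x. x \<notin> A \<Longrightarrow> \<exists>b\<in>G. b \<noteq> a \<and> dist x b = infdist x G"
  shows "(\<integral>x. indicator A x * ((x - a) \<bullet> v) \<partial>M) = 0"
proof -
  note o = optD[OF opt]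
  define c where "c = (\<integral>x. indicator A x * ((x - a) \<bullet> v) \<partial>M)"
  define K where "K = (\<integral>x. indicator A x * (norm v)^2 \<partial>M)"
  have K0: "K \<ge> 0" unfolding K_def by (rule integral_nonneg_AE) (auto simp: indicator_def)
  have "0 \<le> t^2 * K - 2 * t * c" for t
  proof -
    define Gt where "Gt = insert (a + t *\<^sub>R v) (G - {a})"
    have "card Gt \<le> card G"
    proof -
      have "card Gt \<le> Suc (card (G - {a}))" unfolding Gt_def using o(2) by (simp add: card_insert_le_m1)
      also have "\<dots> = card G" using a o(2) by (simp add: card_Diff_singleton) (metis Suc_pred card_gt_0_iff a empty_iff o(2))
      finally show ?thesis .
    qed
    then have adm: "admissible_codebook N Gt" using o(2,4) unfolding admissible_codebook_def Gt_def by auto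
    have gt: "finite Gt" "Gt \<noteq> {}" unfolding Gt_def using o(2) by auto
    have pw: "(infdist x Gt)^2 \<le> (infdist x G)^2 + t^2 * (indicator A x * (norm v)^2) - 2 * t * (indicator A x * ((x - a) \<bullet> v))" for x
    proof (cases "x \<in> A")
      case True
      have "infdist x Gt \<le> dist x (a + t *\<^sub>R v)" by (rule infdist_le) (simp add: Gt_def)
      then have "(infdist x Gt)^2 \<le> (dist x (a + t *\<^sub>R v))^2" by (simp add: power_mono infdist_nonneg)
      also have "(dist x (a + t *\<^sub>R v))^2 = (dist x a)^2 + t^2 * (norm v)^2 - 2 * t * ((x - a) \<bullet> v)"
        by (rule nsq)
      finally show ?thesis using True inA[OF True] by simp
    next
      case False
      then obtain b where b: "b \<in> G" "b \<noteq> a" "dist x b = infdist x G" using outA by blast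
      have "infdist x Gt \<le> dist x b" by (rule infdist_le) (use b in \<open>simp add: Gt_def\<close>)
      then have "(infdist x Gt)^2 \<le> (dist x b)^2" by (simp add: power_mono infdist_nonneg)
      then show ?thesis using False b by simp
    qed
    have i1: "integrable M (\<lambda>x. (infdist x G)^2)" by (rule int_infdist2[OF o(1-3)])
    have i2: "integrable M (\<lambda>x. indicator A x * (norm v)^2)" by (rule int_ind[OF o(1) A])
    have i3: "integrable M (\<lambda>x. indicator A x * ((x - a) \<bullet> v))" by (rule int_lin[OF o(1) A])
    have i123: "integrable M (\<lambda>x. (infdist x G)^2 + t^2 * (indicator A x * (norm v)^2) - 2 * t * (indicator A x * ((x - a) \<bullet> v)))"
      by (intro Bochner_Integration.integrable_diff Bochner_Integration.integrable_add integrable_mult_right i1 i2 i3)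
    have "(\<integral>x. (infdist x G)^2 \<partial>M) \<le> (\<integral>x. (infdist x Gt)^2 \<partial>M)" by (rule opt_real[OF opt adm])
    also have "\<dots> \<le> (\<integral>x. (infdist x G)^2 + t^2 * (indicator A x * (norm v)^2) - 2 * t * (indicator A x * ((x - a) \<bullet> v)) \<partial>M)"
      by (rule integral_mono[OF int_infdist2[OF o(1) gt] i123 pw])
    also have "\<dots> = (\<integral>x. (infdist x G)^2 \<partial>M) + t^2 * K - 2 * t * c"
      unfolding K_def c_def
      by (simp only: Bochner_Integration.integral_diff[OF Bochner_Integration.integrable_add[OF i1 integrable_mult_right[OF i2]] integrable_mult_right[OF i3]]
          Bochner_Integration.integral_add[OF i1 integrable_mult_right[OF i2]] Bochner_Integration.integral_mult_right[OF i2] Bochner_Integration.integral_mult_right[OF i3])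
    finally show ?thesis by simp
  qed
  then have "c = 0" by (rule quad_zero[OF K0])
  then show ?thesis unfolding c_def .
qed

lemma convex_nsq: "convex_on UNIV (\<lambda>x::'a::euclidean_space. (norm x)^2)"
proof (rule convex_onI)
  fix t :: real and x y :: 'a assume t: "0 < t" "t < 1"
  have "(1-t) * (norm x)^2 + t * (norm y)^2 - (norm ((1-t) *\<^sub>R x + t *\<^sub>R y))^2 = t * (1-t) * (norm (x - y))^2"
    unfolding power2_norm_eq_inner
    by (simp add: inner_add_left inner_add_right inner_diff_left inner_diff_right inner_commute algebra_simps)
  moreover have "0 \<le> t * (1-t) * (norm (x - y))^2" using t by simp
  ultimately show "(norm ((1-t) *\<^sub>R x + t *\<^sub>R y))^2 \<le> (1-t) * (norm x)^2 + t * (norm y)^2" by linarith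
qed simp

lemma closed_near: "{x. dist x c = infdist x G} \<in> sets borel"
proof -
  have "closed {x. dist x c = infdist x G}"
    by (intro closed_Collect_eq continuous_on_infdist continuous_on_dist continuous_on_id continuous_on_const)
  then show ?thesis by simp
qed

fun pl :: "'a::euclidean_space set \<Rightarrow> 'a \<Rightarrow> 'a list \<Rightarrow> 'a \<Rightarrow> 'a" where
  "pl G d [] x = d"
| "pl G d (c # cs) x = (if dist x c = infdist x G then c else pl G d cs x)"

lemma pl_in: "d \<in> G \<Longrightarrow> set cs \<subseteq> G \<Longrightarrow> pl G d cs x \<in> G"
  by (induction cs) auto

lemma pl_near: "\<exists>c\<in>set cs. dist x c = infdist x G \<Longrightarrow> dist x (pl G d cs x) = infdist x G"
  by (induction cs) auto

lemma pl_meas: "pl G d cs \<in> borel_measurable borel"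
proof (induction cs)
  case Nil then show ?case by simp
next
  case (Cons c cs)
  have "(\<lambda>x. if dist x c = infdist x G then c else pl G d cs x) \<in> borel_measurable borel"
  proof (rule measurable_If[OF measurable_const Cons])
    have "{x \<in> space borel. dist x c = infdist x G} = {x. dist x c = infdist x G}" by simp
    then show "{x \<in> space borel. dist x c = infdist x G} \<in> sets borel" using closed_near[of c G] by simp
  qed simp
  then show ?case by (simp add: fun_eq_iff)
qed

lemma nearest_exists: fixes G :: "'a::euclidean_space set" assumes "finite G" "G \<noteq> {}"
  shows "nearest_proj G (qproj G)"
proof -
  obtain cs where cs: "set cs = G" using finite_list[OF assms(1)] by blast
  obtain d where d: "d \<in> G" using assms by auto
  have "nearest_proj G (pl G d cs)"
    unfolding nearest_proj_def
  proof (intro conjI allI pl_meas)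
    fix x
    show "pl G d cs x \<in> G" using pl_in[OF d] cs by simp
    obtain c where "c \<in> G" "infdist x G = dist x c" using infdist_att[OF assms] by blast
    then show "dist x (pl G d cs x) = infdist x G" using cs by (intro pl_near) auto
  qed
  then show ?thesis unfolding qproj_def by (rule someI[where P="nearest_proj G"])
qed

lemma sq_split: assumes "P2 M" "finite G" "G \<noteq> {}"
  shows "(\<integral>x. (infdist x G)^2 \<partial>M) = (\<integral>x. (norm x)^2 \<partial>M) - (\<integral>x. FF G (\<lambda>_. 0) x \<partial>M)"
proof -
  have e: "(\<lambda>x. (infdist x G)^2) = (\<lambda>x. (norm x)^2 - FF G (\<lambda>_. 0) x)" by (simp add: FF0[OF assms(2,3)] fun_eq_iff)
  have "integrable M (FF G (\<lambda>_. 0))" by (rule int_FF[OF assms, of _ 0]) simp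
  then show ?thesis unfolding e using P2D(3)[OF assms(1)] by (simp add: Bochner_Integration.integral_diff)
qed

lemma proj_facts: fixes G :: "'a::euclidean_space set" assumes "finite G" "G \<noteq> {}"
  shows "qproj G \<in> borel_measurable borel" "\<And>x. qproj G x \<in> G" "\<And>x. dist x (qproj G x) = infdist x G"
  using nearest_exists[OF assms] unfolding nearest_proj_def by auto

lemma preimg: assumes "p \<in> borel_measurable borel" shows "p -` {a::'a::euclidean_space} \<in> sets borel"
  using measurable_sets[OF assms, of "{a}"] by simp

lemma int_psq: assumes "P2 M" "finite G" "G \<noteq> {}"
  shows "integrable M (\<lambda>x. (norm (qproj G x))^2)"
proof -
  note pf = proj_facts[OF assms(2,3)]
  have "(\<lambda>y::'a. (norm y)^2) \<in> borel_measurable borel" by (intro borel_measurable_continuous_onI continuous_intros)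
  from measurable_compose[OF pf(1) this] have m: "(\<lambda>x. (norm (qproj G x))^2) \<in> borel_measurable borel" by simp
  have b: "\<bar>(norm (qproj G x))^2\<bar> \<le> 0 * (norm x)^2 + (\<Sum>c\<in>G. (norm c)^2)" for x
    using member_le_sum[of "qproj G x" G "\<lambda>c. (norm c)^2", OF pf(2) _ assms(2)] by simp
  show ?thesis using int_quad[OF assms(1) m b] .
qed

lemma key_mu:
  assumes opt: "opt_quantizer M N G"
  shows "(\<integral>x. FF G (\<lambda>_. 0) x \<partial>M) = (\<integral>x. (norm (qproj G x))^2 \<partial>M)"
proof -
  note o = optD[OF opt]
  define p where "p = qproj G"
  note pf = proj_facts[OF o(2,3), folded p_def]
  have pw: "FF G (\<lambda>_. 0) x = (norm (p x))^2 + 2 * (\<Sum>a\<in>G. indicator (p -` {a}) x * ((x - a) \<bullet> a))" for x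
  proof -
    have s: "(\<Sum>a\<in>G. indicator (p -` {a}) x * ((x - a) \<bullet> a)) = (\<Sum>a\<in>G. if a = p x then (x - a) \<bullet> a else 0)"
      by (intro sum.cong refl) (auto simp: indicator_def)
    also have "\<dots> = (x - p x) \<bullet> p x" using pf(2)[of x] o(2) by (simp add: sum.delta')
    finally have s2: "(\<Sum>a\<in>G. indicator (p -` {a}) x * ((x - a) \<bullet> a)) = (x - p x) \<bullet> p x" .
    have "FF G (\<lambda>_. 0) x = (norm x)^2 - (dist x (p x))^2" using FF0[OF o(2,3)] pf(3)[of x] by simp
    also have "\<dots> = (norm (p x))^2 + 2 * ((x - p x) \<bullet> p x)"
      unfolding dist_norm power2_norm_eq_inner
      by (simp add: inner_diff_left inner_diff_right inner_commute algebra_simps)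
    finally show ?thesis using s2 by simp
  qed
  have ia: "integrable M (\<lambda>x. indicator (p -` {a}) x * ((x - a) \<bullet> a))" for a
    by (rule int_lin[OF o(1) preimg[OF pf(1)]])
  have z: "(\<integral>x. indicator (p -` {a}) x * ((x - a) \<bullet> a) \<partial>M) = 0" if a: "a \<in> G" for a
  proof (rule stat[OF opt a preimg[OF pf(1)]])
    fix x assume "x \<in> p -` {a}"
    then show "dist x a = infdist x G" using pf(3)[of x] by simp
  next
    fix x assume "x \<notin> p -` {a}"
    then show "\<exists>b\<in>G. b \<noteq> a \<and> dist x b = infdist x G" using pf(2,3)[of x] by auto
  qed
  have isum: "integrable M (\<lambda>x. \<Sum>a\<in>G. indicator (p -` {a}) x * ((x - a) \<bullet> a))"
    by (rule Bochner_Integration.integrable_sum) (rule ia)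
  have ip: "integrable M (\<lambda>x. (norm (p x))^2)" unfolding p_def by (rule int_psq[OF o(1-3)])
  have "(\<integral>x. FF G (\<lambda>_. 0) x \<partial>M) = (\<integral>x. (norm (p x))^2 + 2 * (\<Sum>a\<in>G. indicator (p -` {a}) x * ((x - a) \<bullet> a)) \<partial>M)"
    by (simp only: pw)
  also have "\<dots> = (\<integral>x. (norm (p x))^2 \<partial>M) + 2 * (\<integral>x. (\<Sum>a\<in>G. indicator (p -` {a}) x * ((x - a) \<bullet> a)) \<partial>M)"
    by (simp only: Bochner_Integration.integral_add[OF ip integrable_mult_right[OF isum]] Bochner_Integration.integral_mult_right[OF isum])
  also have "(\<integral>x. (\<Sum>a\<in>G. indicator (p -` {a}) x * ((x - a) \<bullet> a)) \<partial>M) = (\<Sum>a\<in>G. (\<integral>x. indicator (p -` {a}) x * ((x - a) \<bullet> a) \<partial>M))"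
    by (rule Bochner_Integration.integral_sum) (rule ia)
  also have "\<dots> = 0" using z by simp
  finally show ?thesis unfolding p_def by simp
qed

lemma key_mh:
  assumes opt: "opt_quantizer M N G"
  shows "(\<integral>x. FF G (\<lambda>_. 0) x \<partial>(quant_image M G)) = (\<integral>x. (norm (qproj G x))^2 \<partial>M)"
proof -
  note o = optD[OF opt]
  note pf = proj_facts[OF o(2,3)]
  have pm: "qproj G \<in> measurable M borel" using meas_M[OF P2D(2)[OF o(1)] pf(1)] .
  have "(\<integral>x. FF G (\<lambda>_. 0) x \<partial>(quant_image M G)) = (\<integral>x. FF G (\<lambda>_. 0) (qproj G x) \<partial>M)"
    unfolding quant_image_def by (rule integral_distr[OF pm FF_meas[OF o(2)]])
  also have "\<dots> = (\<integral>x. (norm (qproj G x))^2 \<partial>M)"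
    using FF0[OF o(2,3)] pf(2) by simp
  finally show ?thesis .
qed

lemma cvxD: assumes "cvx_le M1 M2" "convex_on UNIV f" "integrable M2 f"
  shows "integrable M1 f" "(\<integral>x. f x \<partial>M1) \<le> (\<integral>x. f x \<partial>M2)"
  using assms unfolding cvx_le_def by auto

lemma part1:
  fixes \<mu> \<nu> :: "'a::euclidean_space measure"
  assumes opt: "opt_quantizer \<mu> N G"
    and nu: "prob_space \<nu>" "sets \<nu> = sets borel"
    and c1: "cvx_le (quant_image \<mu> G) \<nu>" and c2: "cvx_le \<nu> \<mu>"
  shows "P2 \<nu>" "(\<integral>x. FF G (\<lambda>_. 0) x \<partial>\<nu>) = (\<integral>x. FF G (\<lambda>_. 0) x \<partial>\<mu>)" "opt_quantizer \<nu> N G"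
proof -
  note o = optD[OF opt]
  show P: "P2 \<nu>" unfolding P2_def
    using nu cvxD(1)[OF c2 convex_nsq P2D(3)[OF o(1)]] by auto
  have iFm: "integrable \<mu> (FF G (\<lambda>_. 0))" by (rule int_FF[OF o(1-3), of _ 0]) simp
  have iFn: "integrable \<nu> (FF G (\<lambda>_. 0))" by (rule int_FF[OF P o(2,3), of _ 0]) simp
  have a: "(\<integral>x. FF G (\<lambda>_. 0) x \<partial>\<nu>) \<le> (\<integral>x. FF G (\<lambda>_. 0) x \<partial>\<mu>)"
    by (rule cvxD(2)[OF c2 FF_convex[OF o(2,3)] iFm])
  have b: "(\<integral>x. FF G (\<lambda>_. 0) x \<partial>(quant_image \<mu> G)) \<le> (\<integral>x. FF G (\<lambda>_. 0) x \<partial>\<nu>)"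
    by (rule cvxD(2)[OF c1 FF_convex[OF o(2,3)] iFn])
  show eq: "(\<integral>x. FF G (\<lambda>_. 0) x \<partial>\<nu>) = (\<integral>x. FF G (\<lambda>_. 0) x \<partial>\<mu>)"
    using a b key_mu[OF opt] key_mh[OF opt] by linarith
  show "opt_quantizer \<nu> N G" unfolding opt_quantizer_def
  proof (intro conjI allI impI P)
    show "admissible_codebook N G" using opt unfolding opt_quantizer_def by auto
    fix G' :: "'a set" assume adm: "admissible_codebook N G'"
    have g': "finite G'" "G' \<noteq> {}" using adm unfolding admissible_codebook_def by auto
    have iF'm: "integrable \<mu> (FF G' (\<lambda>_. 0))" by (rule int_FF[OF o(1) g', of _ 0]) simp
    have a': "(\<integral>x. FF G' (\<lambda>_. 0) x \<partial>\<nu>) \<le> (\<integral>x. FF G' (\<lambda>_. 0) x \<partial>\<mu>)"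
      by (rule cvxD(2)[OF c2 FF_convex[OF g'] iF'm])
    have r: "(\<integral>x. (infdist x G)^2 \<partial>\<mu>) \<le> (\<integral>x. (infdist x G')^2 \<partial>\<mu>)" by (rule opt_real[OF opt adm])
    have "(\<integral>x. (infdist x G)^2 \<partial>\<nu>) \<le> (\<integral>x. (infdist x G')^2 \<partial>\<nu>)"
      using sq_split[OF P o(2,3)] sq_split[OF P g'] sq_split[OF o(1-3)] sq_split[OF o(1) g'] a' r eq by linarith
    moreover have "0 \<le> (\<integral>x. (infdist x G)^2 \<partial>\<nu>)" by (rule integral_nonneg_AE) auto
    ultimately show "distortion \<nu> G \<le> distortion \<nu> G'"
      unfolding dist_real[OF P o(2,3)] dist_real[OF P g'] by simp
  qed
qed

definition Cl :: "'a::euclidean_space set \<Rightarrow> 'a \<Rightarrow> 'a set" where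
  "Cl G a = {x. dist x a = infdist x G}"

lemma Cl_sets: "Cl G a \<in> sets borel" unfolding Cl_def by (rule closed_near)

lemma stat_Cl_ind_diff:
  fixes M :: "'a::euclidean_space measure"
  assumes opt: "opt_quantizer M N G" and a: "a \<in> G" and b: "b \<in> G" "b \<noteq> a"
  shows "(\<integral>x. indicator (Cl G a \<inter> Cl G b) x * ((x - a) \<bullet> v) \<partial>M) = 0"
proof -
  note o = optD[OF opt]
  have s2: "Cl G a - Cl G b \<in> sets borel" using Cl_sets by auto
  have z1: "(\<integral>x. indicator (Cl G a) x * ((x - a) \<bullet> v) \<partial>M) = 0"
  proof (rule stat[OF opt a Cl_sets])
    fix x assume "x \<in> Cl G a" then show "dist x a = infdist x G" by (simp add: Cl_def)
  next
    fix x assume x: "x \<notin> Cl G a"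
    obtain c where "c \<in> G" "infdist x G = dist x c" using infdist_att[OF o(2,3)] by blast
    then show "\<exists>b\<in>G. b \<noteq> a \<and> dist x b = infdist x G" using x by (auto simp: Cl_def)
  qed
  have z2: "(\<integral>x. indicator (Cl G a - Cl G b) x * ((x - a) \<bullet> v) \<partial>M) = 0"
  proof (rule stat[OF opt a s2])
    fix x assume "x \<in> Cl G a - Cl G b" then show "dist x a = infdist x G" by (simp add: Cl_def)
  next
    fix x assume x: "x \<notin> Cl G a - Cl G b"
    show "\<exists>b\<in>G. b \<noteq> a \<and> dist x b = infdist x G"
    proof (cases "x \<in> Cl G b")
      case True then show ?thesis using b by (auto simp: Cl_def)
    next
      case False
      then have "x \<notin> Cl G a" using x by auto
      obtain c where "c \<in> G" "infdist x G = dist x c" using infdist_att[OF o(2,3)] by blast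
      then show ?thesis using \<open>x \<notin> Cl G a\<close> by (auto simp: Cl_def)
    qed
  qed
  have pw: "indicator (Cl G a \<inter> Cl G b) x * ((x - a) \<bullet> v) =
      indicator (Cl G a) x * ((x - a) \<bullet> v) - indicator (Cl G a - Cl G b) x * ((x - a) \<bullet> v)" for x
    by (auto simp: indicator_def)
  show ?thesis unfolding pw
    using Bochner_Integration.integral_diff[OF int_lin[OF o(1) Cl_sets] int_lin[OF o(1) s2]] z1 z2 by simp
qed

lemma ties_null:
  fixes M :: "'a::euclidean_space measure"
  assumes opt: "opt_quantizer M N G" and a: "a \<in> G" and b: "b \<in> G" "b \<noteq> a"
  shows "Cl G a \<inter> Cl G b \<in> null_sets M"
proof -
  note o = optD[OF opt]
  interpret prob_space M by (rule P2D(1)[OF o(1)])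
  define S where "S = Cl G a \<inter> Cl G b"
  have S: "S \<in> sets borel" unfolding S_def using Cl_sets by auto
  have SM: "S \<in> sets M" using S P2D(2)[OF o(1)] by simp
  have z1: "(\<integral>x. indicator S x * ((x - a) \<bullet> (b - a)) \<partial>M) = 0"
    unfolding S_def by (rule stat_Cl_ind_diff[OF opt a b])
  have z2: "(\<integral>x. indicator S x * ((x - b) \<bullet> (b - a)) \<partial>M) = 0"
    unfolding S_def using stat_Cl_ind_diff[OF opt b(1) a b(2)[symmetric]] by (simp add: Int_commute)
  have pw: "indicator S x * ((norm (b - a))^2) = indicator S x * ((x - a) \<bullet> (b - a)) - indicator S x * ((x - b) \<bullet> (b - a))" for x
    unfolding power2_norm_eq_inner by (simp add: indicator_def inner_diff_left inner_diff_right inner_commute algebra_simps)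
  have "(\<integral>x. indicator S x * ((norm (b - a))^2) \<partial>M) = 0"
    unfolding pw using Bochner_Integration.integral_diff[OF int_lin[OF o(1) S] int_lin[OF o(1) S]] z1 z2 by simp
  then have "measure M S * (norm (b - a))^2 = 0" using SM by simp
  then have "measure M S = 0" using b by simp
  then show ?thesis unfolding S_def[symmetric] using SM by (simp add: emeasure_eq_measure null_sets_def)
qed

definition Ua :: "'a::euclidean_space set \<Rightarrow> 'a \<Rightarrow> 'a set" where
  "Ua G a = {x. \<forall>b\<in>G. b \<noteq> a \<longrightarrow> dist x a < dist x b}"

definition Vs :: "'a::euclidean_space set \<Rightarrow> 'a \<Rightarrow> real \<Rightarrow> 'a set" where
  "Vs G a e = {x. \<forall>b\<in>G. b \<noteq> a \<longrightarrow> aff b x + e \<le> aff a x}"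

lemma aff_cont: "continuous_on UNIV (aff b)"
  unfolding aff_def by (intro continuous_intros)

lemma Ua_sets: assumes "finite G" shows "Ua G a \<in> sets borel"
proof -
  have e: "Ua G a = (\<Inter>b\<in>G-{a}. {x. dist x a < dist x b})" unfolding Ua_def by auto
  have "open (Ua G a)" unfolding e using assms
    by (intro open_INT ballI open_Collect_less continuous_on_dist continuous_on_id continuous_on_const) auto
  then show ?thesis by simp
qed

lemma Vs_sets: "Vs G a e \<in> sets borel"
proof -
  have e: "Vs G a e = (\<Inter>b\<in>G-{a}. {x. aff b x + e \<le> aff a x})" unfolding Vs_def by auto
  have "closed (Vs G a e)" unfolding e
    by (intro closed_INT ballI closed_Collect_le continuous_on_add aff_cont continuous_on_const)
  then show ?thesis by simp
qed

lemma psi_step: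
  fixes \<mu> \<nu> :: "'a::euclidean_space measure"
  assumes opt: "opt_quantizer \<mu> N G" and a: "a \<in> G" and P: "P2 \<nu>"
    and c2: "cvx_le \<nu> \<mu>" and eq: "(\<integral>x. FF G (\<lambda>_. 0) x \<partial>\<nu>) = (\<integral>x. FF G (\<lambda>_. 0) x \<partial>\<mu>)"
    and e: "e > 0"
  shows "measure \<mu> (Vs G a e) \<le> measure \<nu> (Ua G a)"
proof -
  note o = optD[OF opt]
  define w where "w = (\<lambda>c. if c = a then - e else (0::real))"
  have wb: "\<bar>w c\<bar> \<le> e" for c using e by (simp add: w_def)
  define \<phi> where "\<phi> = FF G (\<lambda>_. 0)"
  define \<psi> where "\<psi> = FF G w"
  have i\<phi>m: "integrable \<mu> \<phi>" unfolding \<phi>_def by (rule int_FF[OF o(1-3), of _ 0]) simp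
  have i\<phi>n: "integrable \<nu> \<phi>" unfolding \<phi>_def by (rule int_FF[OF P o(2,3), of _ 0]) simp
  have i\<psi>m: "integrable \<mu> \<psi>" unfolding \<psi>_def by (rule int_FF[OF o(1-3) wb])
  have i\<psi>n: "integrable \<nu> \<psi>" unfolding \<psi>_def by (rule int_FF[OF P o(2,3) wb])
  have c: "(\<integral>x. \<psi> x \<partial>\<nu>) \<le> (\<integral>x. \<psi> x \<partial>\<mu>)" unfolding \<psi>_def
    by (rule cvxD(2)[OF c2 FF_convex[OF o(2,3)] i\<psi>m[unfolded \<psi>_def]])
  have pw1: "indicator (Vs G a e) x * e \<le> \<phi> x - \<psi> x" for x
  proof -
    obtain c where c: "c \<in> G" "\<phi> x = aff c x + 0" using FF_att[OF o(2,3)] unfolding \<phi>_def by blast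
    obtain c' where c': "c' \<in> G" "\<psi> x = aff c' x + w c'" using FF_att[OF o(2,3)] unfolding \<psi>_def by blast
    have ge: "aff a x \<le> \<phi> x" using FF_ge[OF o(2) a, of x "\<lambda>_. 0"] unfolding \<phi>_def by simp
    have ge2: "aff c' x \<le> \<phi> x" using FF_ge[OF o(2) c'(1), of x "\<lambda>_. 0"] unfolding \<phi>_def by simp
    show ?thesis
    proof (cases "x \<in> Vs G a e")
      case True
      then have V: "\<And>b. b \<in> G \<Longrightarrow> b \<noteq> a \<Longrightarrow> aff b x + e \<le> aff a x" unfolding Vs_def by auto
      have "\<psi> x \<le> aff a x - e"
        using c' V[of c'] by (cases "c' = a") (auto simp: w_def)
      then show ?thesis using True ge by simp
    next
      case False
      have "\<psi> x \<le> \<phi> x" using c' ge2 e by (cases "c' = a") (auto simp: w_def)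
      then show ?thesis using False by simp
    qed
  qed
  have pw2: "\<phi> x - \<psi> x \<le> indicator (Ua G a) x * e" for x
  proof (cases "x \<in> Ua G a")
    case True
    then show ?thesis using FF_bound[OF o(2,3) wb, where x=x] unfolding \<phi>_def \<psi>_def by (simp add: abs_le_iff)
  next
    case False
    then obtain b where b: "b \<in> G" "b \<noteq> a" "dist x b \<le> dist x a" unfolding Ua_def by (auto simp: not_less)
    have "(dist x b)^2 \<le> (dist x a)^2" using b(3) by (simp add: power_mono)
    then have ab: "aff a x \<le> aff b x" using dist_aff[of x a] dist_aff[of x b] by simp
    obtain c where c: "c \<in> G" "\<phi> x = aff c x + 0" using FF_att[OF o(2,3)] unfolding \<phi>_def by blast
    have "\<phi> x \<le> \<psi> x"
    proof (cases "c = a")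
      case True
      then show ?thesis using c ab FF_ge[OF o(2) b(1), of x w] b(2) unfolding \<psi>_def by (simp add: w_def)
    next
      case False
      then show ?thesis using c FF_ge[OF o(2) c(1), of x w] unfolding \<psi>_def by (simp add: w_def)
    qed
    then show ?thesis using False by simp
  qed
  have iVm: "integrable \<mu> (\<lambda>x. indicator (Vs G a e) x * e)" by (rule int_ind[OF o(1) Vs_sets])
  have iUn: "integrable \<nu> (\<lambda>x. indicator (Ua G a) x * e)" by (rule int_ind[OF P Ua_sets[OF o(2)]])
  have sp: "space \<mu> = UNIV" "space \<nu> = UNIV"
    using sets_eq_imp_space_eq[OF P2D(2)[OF o(1)]] sets_eq_imp_space_eq[OF P2D(2)[OF P]] by auto
  have "measure \<mu> (Vs G a e) * e = (\<integral>x. indicator (Vs G a e) x * e \<partial>\<mu>)" using sp by simp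
  also have "\<dots> \<le> (\<integral>x. \<phi> x - \<psi> x \<partial>\<mu>)"
    by (rule integral_mono[OF iVm Bochner_Integration.integrable_diff[OF i\<phi>m i\<psi>m] pw1])
  also have "\<dots> = (\<integral>x. \<phi> x \<partial>\<mu>) - (\<integral>x. \<psi> x \<partial>\<mu>)" by (rule Bochner_Integration.integral_diff[OF i\<phi>m i\<psi>m])
  also have "\<dots> \<le> (\<integral>x. \<phi> x \<partial>\<nu>) - (\<integral>x. \<psi> x \<partial>\<nu>)" using c eq unfolding \<phi>_def by simp
  also have "\<dots> = (\<integral>x. \<phi> x - \<psi> x \<partial>\<nu>)" by (rule Bochner_Integration.integral_diff[OF i\<phi>n i\<psi>n, symmetric])
  also have "\<dots> \<le> (\<integral>x. indicator (Ua G a) x * e \<partial>\<nu>)"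
    by (rule integral_mono[OF Bochner_Integration.integrable_diff[OF i\<phi>n i\<psi>n] iUn pw2])
  also have "\<dots> = measure \<nu> (Ua G a) * e" using sp by simp
  finally show ?thesis using e by simp
qed

lemma U_le:
  fixes \<mu> \<nu> :: "'a::euclidean_space measure"
  assumes opt: "opt_quantizer \<mu> N G" and a: "a \<in> G" and P: "P2 \<nu>"
    and c2: "cvx_le \<nu> \<mu>" and eq: "(\<integral>x. FF G (\<lambda>_. 0) x \<partial>\<nu>) = (\<integral>x. FF G (\<lambda>_. 0) x \<partial>\<mu>)"
  shows "measure \<mu> (Ua G a) \<le> measure \<nu> (Ua G a)"
proof -
  note o = optD[OF opt]
  interpret m: prob_space \<mu> by (rule P2D(1)[OF o(1)])
  interpret n: prob_space \<nu> by (rule P2D(1)[OF P])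
  define Vn where "Vn n = Vs G a (inverse (real (Suc n)))" for n
  have inc: "incseq Vn"
  proof (rule incseq_SucI)
    fix n
    have "inverse (real (Suc (Suc n))) \<le> inverse (real (Suc n))" by (simp add: field_simps)
    then show "Vn n \<subseteq> Vn (Suc n)" unfolding Vn_def Vs_def
    proof (intro subsetI CollectI ballI impI)
      fix x b assume le: "inverse (real (Suc (Suc n))) \<le> inverse (real (Suc n))"
        and x: "x \<in> {x. \<forall>b\<in>G. b \<noteq> a \<longrightarrow> aff b x + inverse (real (Suc n)) \<le> aff a x}"
        and b: "b \<in> G" "b \<noteq> a"
      then have "aff b x + inverse (real (Suc n)) \<le> aff a x" by auto
      with le show "aff b x + inverse (real (Suc (Suc n))) \<le> aff a x" by linarith
    qed
  qed
  have rng: "range Vn \<subseteq> sets \<mu>" using Vs_sets P2D(2)[OF o(1)] unfolding Vn_def by auto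
  have un: "(\<Union>n. Vn n) = Ua G a"
  proof
    show "(\<Union>n. Vn n) \<subseteq> Ua G a"
    proof
      fix x assume "x \<in> (\<Union>n. Vn n)"
      then obtain n where n: "x \<in> Vn n" by auto
      show "x \<in> Ua G a" unfolding Ua_def
      proof (intro CollectI ballI impI)
        fix b assume b: "b \<in> G" "b \<noteq> a"
        have "aff b x + inverse (real (Suc n)) \<le> aff a x" using n b unfolding Vn_def Vs_def by auto
        then have "aff b x < aff a x" by (smt (verit) inverse_positive_iff_positive of_nat_0_less_iff zero_less_Suc)
        then have "(dist x a)^2 < (dist x b)^2" using dist_aff[of x a] dist_aff[of x b] by simp
        then show "dist x a < dist x b" by (rule power2_less_imp_less) simp
      qed
    qed
  next
    show "Ua G a \<subseteq> (\<Union>n. Vn n)"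
    proof
      fix x assume x: "x \<in> Ua G a"
      have "\<forall>b\<in>G-{a}. eventually (\<lambda>n. inverse (real (Suc n)) < aff a x - aff b x) sequentially"
      proof
        fix b assume b: "b \<in> G-{a}"
        then have "dist x a < dist x b" using x unfolding Ua_def by auto
        then have "(dist x a)^2 < (dist x b)^2" by (intro power_strict_mono) auto
        then have "0 < aff a x - aff b x" using dist_aff[of x a] dist_aff[of x b] by simp
        then show "eventually (\<lambda>n. inverse (real (Suc n)) < aff a x - aff b x) sequentially"
          by (rule order_tendstoD(2)[OF LIMSEQ_inverse_real_of_nat])
      qed
      then have "eventually (\<lambda>n. \<forall>b\<in>G-{a}. inverse (real (Suc n)) < aff a x - aff b x) sequentially"
        using o(2) by (intro eventually_ball_finite) auto
      then obtain n where "\<forall>b\<in>G-{a}. inverse (real (Suc n)) < aff a x - aff b x"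
        unfolding eventually_sequentially by auto
      then have "x \<in> Vn n" unfolding Vn_def Vs_def by force
      then show "x \<in> (\<Union>n. Vn n)" by auto
    qed
  qed
  have "emeasure \<mu> (Ua G a) = (SUP n. emeasure \<mu> (Vn n))" using SUP_emeasure_incseq[OF rng inc] un by simp
  also have "\<dots> \<le> ennreal (measure \<nu> (Ua G a))"
  proof (rule SUP_least)
    fix n
    have "measure \<mu> (Vn n) \<le> measure \<nu> (Ua G a)" unfolding Vn_def
      by (rule psi_step[OF opt a P c2 eq]) simp
    then show "emeasure \<mu> (Vn n) \<le> ennreal (measure \<nu> (Ua G a))" by (simp add: m.emeasure_eq_measure)
  qed
  finally show ?thesis by (simp add: m.emeasure_eq_measure)
qed

lemma distr_sum:
  fixes M :: "'a::euclidean_space measure" and p :: "'a \<Rightarrow> 'a"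
  assumes "sets M = sets borel" "p \<in> borel_measurable borel" "\<And>x. p x \<in> G" "finite G" "A \<in> sets borel"
  shows "emeasure (distr M borel p) A = (\<Sum>a\<in>A\<inter>G. emeasure M (p -` {a}))"
proof -
  have sp: "space M = UNIV" using sets_eq_imp_space_eq[OF assms(1)] by simp
  have pM: "p \<in> measurable M borel" using meas_M[OF assms(1,2)] .
  have AG: "A \<inter> G \<in> sets borel" by (rule sets.Int[OF assms(5) borel_closed[OF finite_imp_closed[OF assms(4)]]])
  have "emeasure (distr M borel p) A = emeasure M (p -` A \<inter> space M)" by (rule emeasure_distr[OF pM assms(5)])
  also have "p -` A \<inter> space M = p -` (A \<inter> G) \<inter> space M" using assms(3) by auto
  also have "emeasure M (p -` (A \<inter> G) \<inter> space M) = emeasure (distr M borel p) (A \<inter> G)"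
    by (rule emeasure_distr[OF pM AG, symmetric])
  also have "\<dots> = (\<Sum>a\<in>A\<inter>G. emeasure (distr M borel p) {a})"
    by (rule emeasure_eq_sum_singleton) (use assms(4) in auto)
  also have "\<dots> = (\<Sum>a\<in>A\<inter>G. emeasure M (p -` {a}))"
    by (intro sum.cong refl) (simp add: emeasure_distr[OF pM] sp)
  finally show ?thesis .
qed

lemma cell_sum:
  fixes M :: "'a::euclidean_space measure" and p :: "'a \<Rightarrow> 'a"
  assumes "prob_space M" "sets M = sets borel" "p \<in> borel_measurable borel" "\<And>x. p x \<in> G" "finite G"
  shows "(\<Sum>a\<in>G. measure M (p -` {a})) = 1"
proof -
  interpret prob_space M by (rule assms(1))
  have sp: "space M = UNIV" using sets_eq_imp_space_eq[OF assms(2)] by simp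
  have pM: "p \<in> measurable M borel" using meas_M[OF assms(2,3)] .
  have Gs: "G \<in> sets borel" by (rule borel_closed[OF finite_imp_closed[OF assms(5)]])
  have "emeasure (distr M borel p) G = (\<Sum>a\<in>G\<inter>G. emeasure M (p -` {a}))"
    by (rule distr_sum[OF assms(2,3,4,5) Gs])
  moreover have "emeasure (distr M borel p) G = 1"
    using emeasure_distr[OF pM Gs] assms(4) sp emeasure_space_1 by (simp add: vimage_def)
  ultimately have "(\<Sum>a\<in>G. ennreal (measure M (p -` {a}))) = 1" by (simp add: emeasure_eq_measure)
  then show ?thesis by simp
qed

theorem corollary1:
  fixes \<mu> \<nu> :: "'a::euclidean_space measure" and N :: nat and \<Gamma> :: "'a set"
  assumes "P2 \<mu>" and "N \<ge> 1"
    and "opt_quantizer \<mu> N \<Gamma>"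
    and "prob_space \<nu>" and "sets \<nu> = sets borel"
    and "cvx_le (quant_image \<mu> \<Gamma>) \<nu>" and "cvx_le \<nu> \<mu>"
  shows "opt_quantizer \<nu> N \<Gamma> \<and> quant_image \<nu> \<Gamma> = quant_image \<mu> \<Gamma>"
proof
  note opt = assms(3)
  note o = optD[OF opt]
  note p1 = part1[OF opt assms(4,5,6,7)]
  show "opt_quantizer \<nu> N \<Gamma>" by (rule p1(3))
  define p where "p = qproj \<Gamma>"
  note pf = proj_facts[OF o(2,3), folded p_def]
  interpret m: prob_space \<mu> by (rule P2D(1)[OF o(1)])
  interpret n: prob_space \<nu> by (rule assms(4))
  have sm: "sets \<mu> = sets borel" by (rule P2D(2)[OF o(1)])
  have pre: "p -` {a} \<in> sets borel" for a by (rule preimg[OF pf(1)])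
  have le: "measure \<mu> (p -` {a}) \<le> measure \<nu> (p -` {a})" if a: "a \<in> \<Gamma>" for a
  proof -
    define Ns where "Ns = (\<Union>b\<in>\<Gamma>-{a}. Cl \<Gamma> a \<inter> Cl \<Gamma> b)"
    have Nn: "Ns \<in> null_sets \<mu>" unfolding Ns_def
      using o(2) by (intro null_sets_UN' countable_finite ties_null[OF opt a]) auto
    have sub: "p -` {a} \<subseteq> Ua \<Gamma> a \<union> Ns"
    proof
      fix x assume x: "x \<in> p -` {a}"
      show "x \<in> Ua \<Gamma> a \<union> Ns"
      proof (cases "x \<in> Ua \<Gamma> a")
        case False
        then obtain b where b: "b \<in> \<Gamma>" "b \<noteq> a" "dist x b \<le> dist x a" unfolding Ua_def by (auto simp: not_less)
        have da: "dist x a = infdist x \<Gamma>" using pf(3)[of x] x by simp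
        have "infdist x \<Gamma> \<le> dist x b" by (rule infdist_le[OF b(1)])
        then have "x \<in> Cl \<Gamma> a \<inter> Cl \<Gamma> b" using da b(3) unfolding Cl_def by auto
        then show ?thesis using b unfolding Ns_def by auto
      qed simp
    qed
    have UN: "Ua \<Gamma> a \<union> Ns \<in> sets \<mu>" using Ua_sets[OF o(2)] sm Nn by auto
    have "measure \<mu> (p -` {a}) \<le> measure \<mu> (Ua \<Gamma> a \<union> Ns)" by (rule m.finite_measure_mono[OF sub UN])
    also have "\<dots> = measure \<mu> (Ua \<Gamma> a)" by (rule measure_Un_null_set[OF _ Nn]) (use Ua_sets[OF o(2)] sm in simp)
    also have "\<dots> \<le> measure \<nu> (Ua \<Gamma> a)" by (rule U_le[OF opt a p1(1) assms(7) p1(2)])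
    also have "\<dots> \<le> measure \<nu> (p -` {a})"
    proof (rule n.finite_measure_mono)
      show "Ua \<Gamma> a \<subseteq> p -` {a}"
      proof
        fix x assume x: "x \<in> Ua \<Gamma> a"
        show "x \<in> p -` {a}"
        proof (rule ccontr)
          assume "x \<notin> p -` {a}"
          then have "p x \<noteq> a" by simp
          then have "dist x a < dist x (p x)" using x pf(2)[of x] unfolding Ua_def by auto
          moreover have "dist x (p x) \<le> dist x a" using pf(3)[of x] infdist_le[OF a, of x] by simp
          ultimately show False by simp
        qed
      qed
      show "p -` {a} \<in> sets \<nu>" using pre assms(5) by simp
    qed
    finally show ?thesis .
  qed
  have s1: "(\<Sum>a\<in>\<Gamma>. measure \<mu> (p -` {a})) = 1" by (rule cell_sum[OF P2D(1)[OF o(1)] sm pf(1,2) o(2)])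
  have s2: "(\<Sum>a\<in>\<Gamma>. measure \<nu> (p -` {a})) = 1" by (rule cell_sum[OF assms(4,5) pf(1,2) o(2)])
  have "(\<Sum>a\<in>\<Gamma>. measure \<nu> (p -` {a}) - measure \<mu> (p -` {a})) = 0"
    using s1 s2 by (simp add: sum_subtractf)
  then have "\<forall>a\<in>\<Gamma>. measure \<nu> (p -` {a}) - measure \<mu> (p -` {a}) = 0"
    using o(2) le by (subst sum_nonneg_eq_0_iff[symmetric]) auto
  then have eqa: "emeasure \<nu> (p -` {a}) = emeasure \<mu> (p -` {a})" if "a \<in> \<Gamma>" for a
    using that by (simp add: m.emeasure_eq_measure n.emeasure_eq_measure)
  show "quant_image \<nu> \<Gamma> = quant_image \<mu> \<Gamma>"
    unfolding quant_image_def p_def[symmetric]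
  proof (rule measure_eqI)
    show "sets (distr \<nu> borel p) = sets (distr \<mu> borel p)" by simp
    fix A assume "A \<in> sets (distr \<nu> borel p)"
    then have A: "A \<in> sets borel" by simp
    show "emeasure (distr \<nu> borel p) A = emeasure (distr \<mu> borel p) A"
      unfolding distr_sum[OF assms(5) pf(1,2) o(2) A] distr_sum[OF sm pf(1,2) o(2) A]
      by (intro sum.cong refl eqa) auto
  qed
qed

end
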